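(* $\mathfrak{G}\left[ (\mathbb{X}, \dagger) \right]_X$ is a Markov category.
   Context: Let $(\mathbb{X}, \dagger)$ be a dagger additive category: a category with a dagger (an identity-on-objects, involutive, contravariant functor $f \mapsto f^\dagger$), enriched in abelian groups with $(f+g)^\dagger = f^\dagger + g^\dagger$, and having all finite biproducts whose projections and injections satisfy $\pi_j^\dagger = \iota_j$. Fix an object $X \in \mathbb{X}$. A map $p: B \to B$ is $\dagger$-positive if $p = \phi^\dagger \circ \phi$ for some map $\phi: B \to D$. The Gauss construction $\mathfrak{G}\left[ (\mathbb{X}, \dagger) \right]_X$ is the category whose objects are those of $\mathbb{X}$, whose maps $A \to B$ are triples $(f,p,x)$ with $f: A \to B$, $p: B \to B$ $\dagger$-positive, and $x: X \to B$; identities are $(\mathsf{id}_A, 0, 0)$ and composition is $(g,q,y) \circ (f,p,x) = (g \circ f, q + g \circ p \circ g^\dagger, y + g \circ x)$. It is symmetric monoidal with $A \otimes B = A \oplus B$, $(f,p,x) \otimes (g,q,y) = \left(f \oplus g, p \oplus q, \begin{bmatrix} x \\ y \end{bmatrix}\right)$, unit the zero object $\mathsf{0}$, and symmetry $\mathsf{swap}_{A,B} = \left(\begin{bmatrix} 0 & \mathsf{id}_B \\ \mathsf{id}_A & 0 \end{bmatrix}, 0, 0\right)$. The copy map is $\mathsf{copy}_A = \left(\begin{bmatrix} \mathsf{id}_A \\ \mathsf{id}_A \end{bmatrix}, 0, 0\right): A \to A \otimes A$ and the delete is $\mathsf{del}_A = (0,0,0): A \to \mathsf{0}$. A Markov category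 is a symmetric monoidal category in which each object carries a cocommutative comonoid $(\mathsf{copy}_A, \mathsf{del}_A)$, coherent with the monoidal structure ($\mathsf{copy}_{A\otimes B} = (\mathsf{id}_A \otimes \mathsf{swap}_{A,B} \otimes \mathsf{id}_B)\circ(\mathsf{copy}_A \otimes \mathsf{copy}_B)$, $\mathsf{del}_{A\otimes B} = \mathsf{del}_A \otimes \mathsf{del}_B$), and such that $\mathsf{del}$ is natural ($\mathsf{del}_B \circ f = \mathsf{del}_A$ for all $f: A \to B$). *)

theory Defs
  imports Main
begin

section \<open>Categories with hom-sets indexed by objects (objects = the type 'o)\<close>

text \<open>Every operation takes the relevant objects as explicit arguments, so no typing
information needs to be stored inside the morphisms.
cmp C A B D g f is the composite g o f of f in hom A B and g in hom B D.\<close>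

record ('o,'m) cat =
  hom :: "'o \<Rightarrow> 'o \<Rightarrow> 'm set"
  idm :: "'o \<Rightarrow> 'm"
  cmp :: "'o \<Rightarrow> 'o \<Rightarrow> 'o \<Rightarrow> 'm \<Rightarrow> 'm \<Rightarrow> 'm"

definition category :: "('o,'m,'e) cat_scheme \<Rightarrow> bool" where
  "category C \<longleftrightarrow>
     (\<forall>A. idm C A \<in> hom C A A) \<and>
     (\<forall>A B D f g. f \<in> hom C A B \<longrightarrow> g \<in> hom C B D \<longrightarrow> cmp C A B D g f \<in> hom C A D) \<and>
     (\<forall>A B f. f \<in> hom C A B \<longrightarrow> cmp C A B B (idm C B) f = f \<and> cmp C A A B f (idm C A) = f) \<and>
     (\<forall>A B D E f g h. f \<in> hom C A B \<longrightarrow> g \<in> hom C B D \<longrightarrow> h \<in> hom C D E \<longrightarrow>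
        cmp C A D E h (cmp C A B D g f) = cmp C A B E (cmp C B D E h g) f)"

definition iso :: "('o,'m,'e) cat_scheme \<Rightarrow> 'o \<Rightarrow> 'o \<Rightarrow> 'm \<Rightarrow> bool" where
  "iso C A B f \<longleftrightarrow> f \<in> hom C A B \<and>
     (\<exists>g \<in> hom C B A. cmp C A B A g f = idm C A \<and> cmp C B A B f g = idm C B)"

definition cinv :: "('o,'m,'e) cat_scheme \<Rightarrow> 'o \<Rightarrow> 'o \<Rightarrow> 'm \<Rightarrow> 'm" where
  "cinv C A B f = (SOME g. g \<in> hom C B A \<and> cmp C A B A g f = idm C A \<and> cmp C B A B f g = idm C B)"

section \<open>Dagger additive categories (with chosen binary biproducts and zero object)\<close>

record ('o,'m) dac = "('o,'m) cat" +
  dag :: "'o \<Rightarrow> 'o \<Rightarrow> 'm \<Rightarrow> 'm"     \<comment> \<open>dag C A B f : B -> A for f : A -> B\<close>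
  addm :: "'o \<Rightarrow> 'o \<Rightarrow> 'm \<Rightarrow> 'm \<Rightarrow> 'm"
  zro :: "'o \<Rightarrow> 'o \<Rightarrow> 'm"
  bp :: "'o \<Rightarrow> 'o \<Rightarrow> 'o"
  pr1 :: "'o \<Rightarrow> 'o \<Rightarrow> 'm"
  pr2 :: "'o \<Rightarrow> 'o \<Rightarrow> 'm"
  in1 :: "'o \<Rightarrow> 'o \<Rightarrow> 'm"
  in2 :: "'o \<Rightarrow> 'o \<Rightarrow> 'm"
  zob :: "'o"

definition dagger_additive :: "('o,'m,'e) dac_scheme \<Rightarrow> bool" where
  "dagger_additive C \<longleftrightarrow>
     category C \<and>
     \<comment> \<open>dagger: identity on objects, involutive, contravariant functor\<close>
     (\<forall>A B f. f \<in> hom C A B \<longrightarrow> dag C A B f \<in> hom C B A \<and> dag C B A (dag C A B f) = f) \<and>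
     (\<forall>A. dag C A A (idm C A) = idm C A) \<and>
     (\<forall>A B D f g. f \<in> hom C A B \<longrightarrow> g \<in> hom C B D \<longrightarrow>
        dag C A D (cmp C A B D g f) = cmp C D B A (dag C A B f) (dag C B D g)) \<and>
     \<comment> \<open>enrichment in abelian groups\<close>
     (\<forall>A B. zro C A B \<in> hom C A B) \<and>
     (\<forall>A B f g. f \<in> hom C A B \<longrightarrow> g \<in> hom C A B \<longrightarrow> addm C A B f g \<in> hom C A B) \<and>
     (\<forall>A B f g h. f \<in> hom C A B \<longrightarrow> g \<in> hom C A B \<longrightarrow> h \<in> hom C A B \<longrightarrow>
        addm C A B (addm C A B f g) h = addm C A B f (addm C A B g h)) \<and>
     (\<forall>A B f g. f \<in> hom C A B \<longrightarrow> g \<in> hom C A B \<longrightarrow> addm C A B f g = addm C A B g f) \<and>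
     (\<forall>A B f. f \<in> hom C A B \<longrightarrow> addm C A B f (zro C A B) = f) \<and>
     (\<forall>A B f. f \<in> hom C A B \<longrightarrow> (\<exists>g \<in> hom C A B. addm C A B f g = zro C A B)) \<and>
     (\<forall>A B D f g h. f \<in> hom C A B \<longrightarrow> g \<in> hom C A B \<longrightarrow> h \<in> hom C B D \<longrightarrow>
        cmp C A B D h (addm C A B f g) = addm C A D (cmp C A B D h f) (cmp C A B D h g)) \<and>
     (\<forall>A B D f g h. h \<in> hom C A B \<longrightarrow> f \<in> hom C B D \<longrightarrow> g \<in> hom C B D \<longrightarrow>
        cmp C A B D (addm C B D f g) h = addm C A D (cmp C A B D f h) (cmp C A B D g h)) \<and>
     \<comment> \<open>dagger is additive\<close>
     (\<forall>A B f g. f \<in> hom C A B \<longrightarrow> g \<in> hom C A B \<longrightarrow>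
        dag C A B (addm C A B f g) = addm C B A (dag C A B f) (dag C A B g)) \<and>
     \<comment> \<open>binary biproducts\<close>
     (\<forall>A B. pr1 C A B \<in> hom C (bp C A B) A \<and> pr2 C A B \<in> hom C (bp C A B) B \<and>
            in1 C A B \<in> hom C A (bp C A B) \<and> in2 C A B \<in> hom C B (bp C A B)) \<and>
     (\<forall>A B. cmp C A (bp C A B) A (pr1 C A B) (in1 C A B) = idm C A \<and>
            cmp C B (bp C A B) B (pr2 C A B) (in2 C A B) = idm C B \<and>
            cmp C B (bp C A B) A (pr1 C A B) (in2 C A B) = zro C B A \<and>
            cmp C A (bp C A B) B (pr2 C A B) (in1 C A B) = zro C A B \<and>
            addm C (bp C A B) (bp C A B)
              (cmp C (bp C A B) A (bp C A B) (in1 C A B) (pr1 C A B))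
              (cmp C (bp C A B) B (bp C A B) (in2 C A B) (pr2 C A B)) = idm C (bp C A B)) \<and>
     (\<forall>A B. dag C (bp C A B) A (pr1 C A B) = in1 C A B \<and> dag C (bp C A B) B (pr2 C A B) = in2 C A B) \<and>
     \<comment> \<open>zero object (nullary biproduct)\<close>
     idm C (zob C) = zro C (zob C) (zob C)"

section \<open>Symmetric monoidal and Markov categories\<close>

text \<open>tensm C A B A' B' f g : A \<otimes> A' -> B \<otimes> B' for f : A -> B, g : A' -> B'.
asc A B D : (A \<otimes> B) \<otimes> D -> A \<otimes> (B \<otimes> D); lun A : I \<otimes> A -> A; run A : A \<otimes> I -> A;
brd A B : A \<otimes> B -> B \<otimes> A.\<close>

record ('o,'m) smc = "('o,'m) cat" +
  tens :: "'o \<Rightarrow> 'o \<Rightarrow> 'o"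
  tensm :: "'o \<Rightarrow> 'o \<Rightarrow> 'o \<Rightarrow> 'o \<Rightarrow> 'm \<Rightarrow> 'm \<Rightarrow> 'm"
  munit :: "'o"
  asc :: "'o \<Rightarrow> 'o \<Rightarrow> 'o \<Rightarrow> 'm"
  lun :: "'o \<Rightarrow> 'm"
  run :: "'o \<Rightarrow> 'm"
  brd :: "'o \<Rightarrow> 'o \<Rightarrow> 'm"

record ('o,'m) markov = "('o,'m) smc" +
  cpy :: "'o \<Rightarrow> 'm"
  del :: "'o \<Rightarrow> 'm"

definition sym_monoidal :: "('o,'m,'e) smc_scheme \<Rightarrow> bool" where
  "sym_monoidal C \<longleftrightarrow>
     category C \<and>
     \<comment> \<open>tensor is a bifunctor\<close>
     (\<forall>A B A' B' f g. f \<in> hom C A B \<longrightarrow> g \<in> hom C A' B' \<longrightarrow>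
        tensm C A B A' B' f g \<in> hom C (tens C A A') (tens C B B')) \<and>
     (\<forall>A A'. tensm C A A A' A' (idm C A) (idm C A') = idm C (tens C A A')) \<and>
     (\<forall>A B D A' B' D' f g f' g'. f \<in> hom C A B \<longrightarrow> g \<in> hom C B D \<longrightarrow>
        f' \<in> hom C A' B' \<longrightarrow> g' \<in> hom C B' D' \<longrightarrow>
        cmp C (tens C A A') (tens C B B') (tens C D D') (tensm C B D B' D' g g') (tensm C A B A' B' f f')
        = tensm C A D A' D' (cmp C A B D g f) (cmp C A' B' D' g' f')) \<and>
     \<comment> \<open>structure maps are isomorphisms\<close>
     (\<forall>A B D. iso C (tens C (tens C A B) D) (tens C A (tens C B D)) (asc C A B D)) \<and>
     (\<forall>A. iso C (tens C (munit C) A) A (lun C A)) \<and>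
     (\<forall>A. iso C (tens C A (munit C)) A (run C A)) \<and>
     (\<forall>A B. iso C (tens C A B) (tens C B A) (brd C A B)) \<and>
     \<comment> \<open>naturality\<close>
     (\<forall>A A' B B' D D' f g h. f \<in> hom C A A' \<longrightarrow> g \<in> hom C B B' \<longrightarrow> h \<in> hom C D D' \<longrightarrow>
        cmp C (tens C (tens C A B) D) (tens C (tens C A' B') D') (tens C A' (tens C B' D'))
          (asc C A' B' D') (tensm C (tens C A B) (tens C A' B') D D' (tensm C A A' B B' f g) h)
        = cmp C (tens C (tens C A B) D) (tens C A (tens C B D)) (tens C A' (tens C B' D'))
          (tensm C A A' (tens C B D) (tens C B' D') f (tensm C B B' D D' g h)) (asc C A B D)) \<and>
     (\<forall>A B f. f \<in> hom C A B \<longrightarrow>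
        cmp C (tens C (munit C) A) (tens C (munit C) B) B (lun C B)
          (tensm C (munit C) (munit C) A B (idm C (munit C)) f)
        = cmp C (tens C (munit C) A) A B f (lun C A)) \<and>
     (\<forall>A B f. f \<in> hom C A B \<longrightarrow>
        cmp C (tens C A (munit C)) (tens C B (munit C)) B (run C B)
          (tensm C A B (munit C) (munit C) f (idm C (munit C)))
        = cmp C (tens C A (munit C)) A B f (run C A)) \<and>
     (\<forall>A A' B B' f g. f \<in> hom C A A' \<longrightarrow> g \<in> hom C B B' \<longrightarrow>
        cmp C (tens C A B) (tens C A' B') (tens C B' A') (brd C A' B') (tensm C A A' B B' f g)
        = cmp C (tens C A B) (tens C B A) (tens C B' A') (tensm C B B' A A' g f) (brd C A B)) \<and>
     \<comment> \<open>pentagon\<close>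
     (\<forall>A B D E.
        cmp C (tens C (tens C (tens C A B) D) E) (tens C (tens C A B) (tens C D E))
              (tens C A (tens C B (tens C D E)))
          (asc C A B (tens C D E)) (asc C (tens C A B) D E)
        = cmp C (tens C (tens C (tens C A B) D) E) (tens C A (tens C (tens C B D) E))
              (tens C A (tens C B (tens C D E)))
          (tensm C A A (tens C (tens C B D) E) (tens C B (tens C D E)) (idm C A) (asc C B D E))
          (cmp C (tens C (tens C (tens C A B) D) E) (tens C (tens C A (tens C B D)) E)
                 (tens C A (tens C (tens C B D) E))
             (asc C A (tens C B D) E)
             (tensm C (tens C (tens C A B) D) (tens C A (tens C B D)) E E (asc C A B D) (idm C E)))) \<and>
     \<comment> \<open>triangle\<close>
     (\<forall>A B.
        cmp C (tens C (tens C A (munit C)) B) (tens C A (tens C (munit C) B)) (tens C A B)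
          (tensm C A A (tens C (munit C) B) B (idm C A) (lun C B)) (asc C A (munit C) B)
        = tensm C (tens C A (munit C)) A B B (run C A) (idm C B)) \<and>
     \<comment> \<open>hexagon\<close>
     (\<forall>A B D.
        cmp C (tens C (tens C A B) D) (tens C (tens C B D) A) (tens C B (tens C D A))
          (asc C B D A)
          (cmp C (tens C (tens C A B) D) (tens C A (tens C B D)) (tens C (tens C B D) A)
             (brd C A (tens C B D)) (asc C A B D))
        = cmp C (tens C (tens C A B) D) (tens C B (tens C A D)) (tens C B (tens C D A))
          (tensm C B B (tens C A D) (tens C D A) (idm C B) (brd C A D))
          (cmp C (tens C (tens C A B) D) (tens C (tens C B A) D) (tens C B (tens C A D))
             (asc C B A D)
             (tensm C (tens C A B) (tens C B A) D D (brd C A B) (idm C D)))) \<and>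
     \<comment> \<open>symmetry\<close>
     (\<forall>A B. cmp C (tens C A B) (tens C B A) (tens C A B) (brd C B A) (brd C A B) = idm C (tens C A B))"

text \<open>The middle-four interchange (A \<otimes> A) \<otimes> (B \<otimes> B) -> (A \<otimes> B) \<otimes> (A \<otimes> B), i.e. the
map written id \<otimes> swap \<otimes> id in strictified notation, with the associators made explicit.\<close>
definition mid4 :: "('o,'m,'e) smc_scheme \<Rightarrow> 'o \<Rightarrow> 'o \<Rightarrow> 'm" where
  "mid4 C A B =
     (let T = tens C;
          O0 = T (T A A) (T B B); O1 = T A (T A (T B B)); O2 = T A (T (T A B) B);
          O3 = T A (T (T B A) B); O4 = T A (T B (T A B)); O5 = T (T A B) (T A B);
          s1 = asc C A A (T B B);
          s2 = tensm C A A (T A (T B B)) (T (T A B) B) (idm C A) (cinv C (T (T A B) B) (T A (T B B)) (asc C A B B));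
          s3 = tensm C A A (T (T A B) B) (T (T B A) B) (idm C A) (tensm C (T A B) (T B A) B B (brd C A B) (idm C B));
          s4 = tensm C A A (T (T B A) B) (T B (T A B)) (idm C A) (asc C B A B);
          s5 = cinv C O5 O4 (asc C A B (T A B))
      in cmp C O0 O4 O5 s5 (cmp C O0 O3 O4 s4 (cmp C O0 O2 O3 s3 (cmp C O0 O1 O2 s2 s1))))"

definition markov_category :: "('o,'m,'e) markov_scheme \<Rightarrow> bool" where
  "markov_category C \<longleftrightarrow>
     sym_monoidal C \<and>
     (\<forall>A. cpy C A \<in> hom C A (tens C A A) \<and> del C A \<in> hom C A (munit C)) \<and>
     \<comment> \<open>counit laws\<close>
     (\<forall>A. cmp C A (tens C (munit C) A) A (lun C A)
            (cmp C A (tens C A A) (tens C (munit C) A) (tensm C A (munit C) A A (del C A) (idm C A)) (cpy C A))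
          = idm C A) \<and>
     (\<forall>A. cmp C A (tens C A (munit C)) A (run C A)
            (cmp C A (tens C A A) (tens C A (munit C)) (tensm C A A A (munit C) (idm C A) (del C A)) (cpy C A))
          = idm C A) \<and>
     \<comment> \<open>coassociativity\<close>
     (\<forall>A. cmp C A (tens C (tens C A A) A) (tens C A (tens C A A)) (asc C A A A)
            (cmp C A (tens C A A) (tens C (tens C A A) A) (tensm C A (tens C A A) A A (cpy C A) (idm C A)) (cpy C A))
          = cmp C A (tens C A A) (tens C A (tens C A A)) (tensm C A A A (tens C A A) (idm C A) (cpy C A)) (cpy C A)) \<and>
     \<comment> \<open>cocommutativity\<close>
     (\<forall>A. cmp C A (tens C A A) (tens C A A) (brd C A A) (cpy C A) = cpy C A) \<and>
     \<comment> \<open>compatibility with the monoidal structure\<close>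
     (\<forall>A B. cpy C (tens C A B)
          = cmp C (tens C A B) (tens C (tens C A A) (tens C B B)) (tens C (tens C A B) (tens C A B))
              (mid4 C A B) (tensm C A (tens C A A) B (tens C B B) (cpy C A) (cpy C B))) \<and>
     (\<forall>A B. del C (tens C A B)
          = cmp C (tens C A B) (tens C (munit C) (munit C)) (munit C)
              (lun C (munit C)) (tensm C A (munit C) B (munit C) (del C A) (del C B))) \<and>
     \<comment> \<open>naturality of delete\<close>
     (\<forall>A B f. f \<in> hom C A B \<longrightarrow> cmp C A B (munit C) (del C B) f = del C A)"

section \<open>The Gauss construction\<close>

definition dpositive :: "('o,'m,'e) dac_scheme \<Rightarrow> 'o \<Rightarrow> 'm \<Rightarrow> bool" where
  "dpositive C B p \<longleftrightarrow> p \<in> hom C B B \<and>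
     (\<exists>D \<phi>. \<phi> \<in> hom C B D \<and> p = cmp C B D B (dag C B D \<phi>) \<phi>)"

definition bpmap :: "('o,'m,'e) dac_scheme \<Rightarrow> 'o \<Rightarrow> 'o \<Rightarrow> 'o \<Rightarrow> 'o \<Rightarrow> 'm \<Rightarrow> 'm \<Rightarrow> 'm" where
  "bpmap C A B A' B' f g =
     addm C (bp C A A') (bp C B B')
       (cmp C (bp C A A') B (bp C B B') (in1 C B B') (cmp C (bp C A A') A B f (pr1 C A A')))
       (cmp C (bp C A A') B' (bp C B B') (in2 C B B') (cmp C (bp C A A') A' B' g (pr2 C A A')))"

definition colpair :: "('o,'m,'e) dac_scheme \<Rightarrow> 'o \<Rightarrow> 'o \<Rightarrow> 'o \<Rightarrow> 'm \<Rightarrow> 'm \<Rightarrow> 'm" where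
  "colpair C X A B x y =
     addm C X (bp C A B) (cmp C X A (bp C A B) (in1 C A B) x) (cmp C X B (bp C A B) (in2 C A B) y)"

definition swapX :: "('o,'m,'e) dac_scheme \<Rightarrow> 'o \<Rightarrow> 'o \<Rightarrow> 'm" where
  "swapX C A B =
     addm C (bp C A B) (bp C B A)
       (cmp C (bp C A B) B (bp C B A) (in1 C B A) (pr2 C A B))
       (cmp C (bp C A B) A (bp C B A) (in2 C B A) (pr1 C A B))"

definition copyX :: "('o,'m,'e) dac_scheme \<Rightarrow> 'o \<Rightarrow> 'm" where
  "copyX C A = addm C A (bp C A A) (in1 C A A) (in2 C A A)"

definition assocX :: "('o,'m,'e) dac_scheme \<Rightarrow> 'o \<Rightarrow> 'o \<Rightarrow> 'o \<Rightarrow> 'm" where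
  "assocX C A B D =
     (let P = bp C (bp C A B) D; Q = bp C B D; R = bp C A Q in
      addm C P R
        (cmp C P A R (in1 C A Q) (cmp C P (bp C A B) A (pr1 C A B) (pr1 C (bp C A B) D)))
        (cmp C P Q R (in2 C A Q)
           (addm C P Q
              (cmp C P B Q (in1 C B D) (cmp C P (bp C A B) B (pr2 C A B) (pr1 C (bp C A B) D)))
              (cmp C P D Q (in2 C B D) (pr2 C (bp C A B) D)))))"

definition gauss_hom :: "('o,'m,'e) dac_scheme \<Rightarrow> 'o \<Rightarrow> 'o \<Rightarrow> 'o \<Rightarrow> ('m \<times> 'm \<times> 'm) set" where
  "gauss_hom C X A B = {(f, p, x). f \<in> hom C A B \<and> dpositive C B p \<and> x \<in> hom C X B}"

definition gauss_cmp :: "('o,'m,'e) dac_scheme \<Rightarrow> 'o \<Rightarrow> 'o \<Rightarrow> 'o \<Rightarrow> 'o \<Rightarrow>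
    'm \<times> 'm \<times> 'm \<Rightarrow> 'm \<times> 'm \<times> 'm \<Rightarrow> 'm \<times> 'm \<times> 'm" where
  "gauss_cmp C X A B D m n =
     (case m of (g, q, y) \<Rightarrow> case n of (f, p, x) \<Rightarrow>
        (cmp C A B D g f,
         addm C D D q (cmp C D B D (cmp C B B D g p) (dag C B D g)),
         addm C X D y (cmp C X B D g x)))"

definition gauss_tensm :: "('o,'m,'e) dac_scheme \<Rightarrow> 'o \<Rightarrow> 'o \<Rightarrow> 'o \<Rightarrow> 'o \<Rightarrow> 'o \<Rightarrow>
    'm \<times> 'm \<times> 'm \<Rightarrow> 'm \<times> 'm \<times> 'm \<Rightarrow> 'm \<times> 'm \<times> 'm" where
  "gauss_tensm C X A B A' B' m n =
     (case m of (f, p, x) \<Rightarrow> case n of (g, q, y) \<Rightarrow>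
        (bpmap C A B A' B' f g, bpmap C B B B' B' p q, colpair C X B B' x y))"

definition glift :: "('o,'m,'e) dac_scheme \<Rightarrow> 'o \<Rightarrow> 'o \<Rightarrow> 'm \<Rightarrow> 'm \<times> 'm \<times> 'm" where
  "glift C X B f = (f, zro C B B, zro C X B)"

definition gauss :: "('o,'m,'e) dac_scheme \<Rightarrow> 'o \<Rightarrow> ('o, 'm \<times> 'm \<times> 'm) markov" where
  "gauss C X =
     \<lparr> hom = gauss_hom C X,
       idm = (\<lambda>A. glift C X A (idm C A)),
       cmp = gauss_cmp C X,
       tens = bp C,
       tensm = gauss_tensm C X,
       munit = zob C,
       asc = (\<lambda>A B D. glift C X (bp C A (bp C B D)) (assocX C A B D)),
       lun = (\<lambda>A. glift C X A (pr2 C (zob C) A)),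
       run = (\<lambda>A. glift C X A (pr1 C A (zob C))),
       brd = (\<lambda>A B. glift C X (bp C B A) (swapX C A B)),
       cpy = (\<lambda>A. glift C X (bp C A A) (copyX C A)),
       del = (\<lambda>A. glift C X (zob C) (zro C A (zob C))) \<rparr>"

end

theory Submission
  imports Defs
begin

definition heq :: "'o \<Rightarrow> 'o \<Rightarrow> 'm \<Rightarrow> 'm \<Rightarrow> bool" where
  "heq Z Y f g \<longleftrightarrow> f = g"

locale DA =
  fixes C :: "('o,'m,'e) dac_scheme"
  assumes DA: "dagger_additive C"
begin

lemmas DD = DA[unfolded dagger_additive_def]
lemmas D1 = DD[THEN conjunct1]
lemmas D2 = DD[THEN conjunct2, THEN conjunct1]
lemmas D3 = DD[THEN conjunct2, THEN conjunct2, THEN conjunct1]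
lemmas D4 = DD[THEN conjunct2, THEN conjunct2, THEN conjunct2, THEN conjunct1]
lemmas D5 = DD[THEN conjunct2, THEN conjunct2, THEN conjunct2, THEN conjunct2, THEN conjunct1]
lemmas D6 = DD[THEN conjunct2, THEN conjunct2, THEN conjunct2, THEN conjunct2, THEN conjunct2, THEN conjunct1]
lemmas D7 = DD[THEN conjunct2, THEN conjunct2, THEN conjunct2, THEN conjunct2, THEN conjunct2, THEN conjunct2, THEN conjunct1]
lemmas D8 = DD[THEN conjunct2, THEN conjunct2, THEN conjunct2, THEN conjunct2, THEN conjunct2, THEN conjunct2, THEN conjunct2, THEN conjunct1]
lemmas D9 = DD[THEN conjunct2, THEN conjunct2, THEN conjunct2, THEN conjunct2, THEN conjunct2, THEN conjunct2, THEN conjunct2, THEN conjunct2, THEN conjunct1]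
lemmas D10 = DD[THEN conjunct2, THEN conjunct2, THEN conjunct2, THEN conjunct2, THEN conjunct2, THEN conjunct2, THEN conjunct2, THEN conjunct2, THEN conjunct2, THEN conjunct1]
lemmas D11 = DD[THEN conjunct2, THEN conjunct2, THEN conjunct2, THEN conjunct2, THEN conjunct2, THEN conjunct2, THEN conjunct2, THEN conjunct2, THEN conjunct2, THEN conjunct2, THEN conjunct1]
lemmas D12 = DD[THEN conjunct2, THEN conjunct2, THEN conjunct2, THEN conjunct2, THEN conjunct2, THEN conjunct2, THEN conjunct2, THEN conjunct2, THEN conjunct2, THEN conjunct2, THEN conjunct2, THEN conjunct1]
lemmas D13 = DD[THEN conjunct2, THEN conjunct2, THEN conjunct2, THEN conjunct2, THEN conjunct2, THEN conjunct2, THEN conjunct2, THEN conjunct2, THEN conjunct2, THEN conjunct2, THEN conjunct2, THEN conjunct2, THEN conjunct1]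
lemmas D14 = DD[THEN conjunct2, THEN conjunct2, THEN conjunct2, THEN conjunct2, THEN conjunct2, THEN conjunct2, THEN conjunct2, THEN conjunct2, THEN conjunct2, THEN conjunct2, THEN conjunct2, THEN conjunct2, THEN conjunct2, THEN conjunct1]
lemmas D15 = DD[THEN conjunct2, THEN conjunct2, THEN conjunct2, THEN conjunct2, THEN conjunct2, THEN conjunct2, THEN conjunct2, THEN conjunct2, THEN conjunct2, THEN conjunct2, THEN conjunct2, THEN conjunct2, THEN conjunct2, THEN conjunct2, THEN conjunct1]
lemmas D16 = DD[THEN conjunct2, THEN conjunct2, THEN conjunct2, THEN conjunct2, THEN conjunct2, THEN conjunct2, THEN conjunct2, THEN conjunct2, THEN conjunct2, THEN conjunct2, THEN conjunct2, THEN conjunct2, THEN conjunct2, THEN conjunct2, THEN conjunct2, THEN conjunct1]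
lemmas D17 = DD[THEN conjunct2, THEN conjunct2, THEN conjunct2, THEN conjunct2, THEN conjunct2, THEN conjunct2, THEN conjunct2, THEN conjunct2, THEN conjunct2, THEN conjunct2, THEN conjunct2, THEN conjunct2, THEN conjunct2, THEN conjunct2, THEN conjunct2, THEN conjunct2]
lemma cat: "category C" by (rule D1)

lemma idm_hom[simp]: "idm C A \<in> hom C A A" using cat unfolding category_def by blast
lemma cmp_hom[simp]: "f \<in> hom C A B \<Longrightarrow> g \<in> hom C B D \<Longrightarrow> cmp C A B D g f \<in> hom C A D"
  using cat unfolding category_def by blast
lemma id_l[simp]: "f \<in> hom C A B \<Longrightarrow> cmp C A B B (idm C B) f = f"
  using cat unfolding category_def by blast
lemma id_r[simp]: "f \<in> hom C A B \<Longrightarrow> cmp C A A B f (idm C A) = f"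
  using cat unfolding category_def by blast
lemma assoc: "f \<in> hom C A B \<Longrightarrow> g \<in> hom C B D \<Longrightarrow> h \<in> hom C D E \<Longrightarrow>
        cmp C A D E h (cmp C A B D g f) = cmp C A B E (cmp C B D E h g) f"
  using cat unfolding category_def by blast
lemma ra[simp]: "f \<in> hom C A B \<Longrightarrow> g \<in> hom C B D \<Longrightarrow> h \<in> hom C D E \<Longrightarrow>
        cmp C A B E (cmp C B D E h g) f = cmp C A D E h (cmp C A B D g f)"
  using assoc by simp

lemma dag_hom[simp]: "f \<in> hom C A B \<Longrightarrow> dag C A B f \<in> hom C B A"
  using D2 by blast
lemma dag_dag[simp]: "f \<in> hom C A B \<Longrightarrow> dag C B A (dag C A B f) = f"
  using D2 by blast
lemma dag_id[simp]: "dag C A A (idm C A) = idm C A"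
  using D3 by blast
lemma dag_cmp[simp]: "f \<in> hom C A B \<Longrightarrow> g \<in> hom C B D \<Longrightarrow>
        dag C A D (cmp C A B D g f) = cmp C D B A (dag C A B f) (dag C B D g)"
  using D4 by blast
lemma zro_hom[simp]: "zro C A B \<in> hom C A B"
  using D5 by blast
lemma add_hom[simp]: "f \<in> hom C A B \<Longrightarrow> g \<in> hom C A B \<Longrightarrow> addm C A B f g \<in> hom C A B"
  using D6 by blast
lemma add_assoc[simp]: "f \<in> hom C A B \<Longrightarrow> g \<in> hom C A B \<Longrightarrow> h \<in> hom C A B \<Longrightarrow>
        addm C A B (addm C A B f g) h = addm C A B f (addm C A B g h)"
  using D7 by blast
lemma add_comm: "f \<in> hom C A B \<Longrightarrow> g \<in> hom C A B \<Longrightarrow> addm C A B f g = addm C A B g f"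
  using D8 by blast
lemma add_zr[simp]: "f \<in> hom C A B \<Longrightarrow> addm C A B f (zro C A B) = f"
  using D9 by blast
lemma add_zl[simp]: "f \<in> hom C A B \<Longrightarrow> addm C A B (zro C A B) f = f"
  using add_comm add_zr zro_hom by metis
lemma neg: "f \<in> hom C A B \<Longrightarrow> \<exists>g \<in> hom C A B. addm C A B f g = zro C A B"
  using D10 by blast
lemma dl[simp]: "f \<in> hom C A B \<Longrightarrow> g \<in> hom C A B \<Longrightarrow> h \<in> hom C B D \<Longrightarrow>
        cmp C A B D h (addm C A B f g) = addm C A D (cmp C A B D h f) (cmp C A B D h g)"
  using D11 by blast
lemma dr[simp]: "h \<in> hom C A B \<Longrightarrow> f \<in> hom C B D \<Longrightarrow> g \<in> hom C B D \<Longrightarrow>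
        cmp C A B D (addm C B D f g) h = addm C A D (cmp C A B D f h) (cmp C A B D g h)"
  using D12 by blast
lemma dag_add[simp]: "f \<in> hom C A B \<Longrightarrow> g \<in> hom C A B \<Longrightarrow>
        dag C A B (addm C A B f g) = addm C B A (dag C A B f) (dag C A B g)"
  using D13 by blast
lemma pr1_hom[simp]: "pr1 C A B \<in> hom C (bp C A B) A"
  using D14 by blast
lemma pr2_hom[simp]: "pr2 C A B \<in> hom C (bp C A B) B"
  using D14 by blast
lemma in1_hom[simp]: "in1 C A B \<in> hom C A (bp C A B)"
  using D14 by blast
lemma in2_hom[simp]: "in2 C A B \<in> hom C B (bp C A B)"
  using D14 by blast
lemma p1i1[simp]: "cmp C A (bp C A B) A (pr1 C A B) (in1 C A B) = idm C A"
  using D15 by blast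
lemma p2i2[simp]: "cmp C B (bp C A B) B (pr2 C A B) (in2 C A B) = idm C B"
  using D15 by blast
lemma p1i2[simp]: "cmp C B (bp C A B) A (pr1 C A B) (in2 C A B) = zro C B A"
  using D15 by blast
lemma p2i1[simp]: "cmp C A (bp C A B) B (pr2 C A B) (in1 C A B) = zro C A B"
  using D15 by blast
lemma bpid: "addm C (bp C A B) (bp C A B)
              (cmp C (bp C A B) A (bp C A B) (in1 C A B) (pr1 C A B))
              (cmp C (bp C A B) B (bp C A B) (in2 C A B) (pr2 C A B)) = idm C (bp C A B)"
  using D15 by blast
lemma dag_pr1[simp]: "dag C (bp C A B) A (pr1 C A B) = in1 C A B"
  using D16 by blast
lemma dag_pr2[simp]: "dag C (bp C A B) B (pr2 C A B) = in2 C A B"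
  using D16 by blast
lemma dag_in1[simp]: "dag C A (bp C A B) (in1 C A B) = pr1 C A B"
  using dag_pr1 dag_dag pr1_hom by metis
lemma dag_in2[simp]: "dag C B (bp C A B) (in2 C A B) = pr2 C A B"
  using dag_pr2 dag_dag pr2_hom by metis
lemma zob_id: "idm C (zob C) = zro C (zob C) (zob C)"
  using D17 by blast

lemma idem_zero: assumes "x \<in> hom C A B" "addm C A B x x = x" shows "x = zro C A B"
proof -
  obtain g where g: "g \<in> hom C A B" "addm C A B x g = zro C A B" using neg assms(1) by blast
  have "x = addm C A B x (addm C A B x g)" using assms(1) g by simp
  also have "\<dots> = addm C A B (addm C A B x x) g" using assms(1) g by simp
  also have "\<dots> = zro C A B" using assms g by simp
  finally show ?thesis .
qed

lemma cz_r[simp]: "h \<in> hom C B D \<Longrightarrow> cmp C A B D h (zro C A B) = zro C A D"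
  by (rule idem_zero) (simp, metis add_zr dl zro_hom)
lemma cz_l[simp]: "f \<in> hom C A B \<Longrightarrow> cmp C A B D (zro C B D) f = zro C A D"
  by (rule idem_zero) (simp, metis add_zr dr zro_hom)
lemma dag_z[simp]: "dag C A B (zro C A B) = zro C B A"
  by (rule idem_zero) (simp, metis add_zr dag_add zro_hom)

lemma rav: "cmp C B D E h g = r \<Longrightarrow> f \<in> hom C A B \<Longrightarrow> g \<in> hom C B D \<Longrightarrow> h \<in> hom C D E \<Longrightarrow>
   cmp C A D E h (cmp C A B D g f) = cmp C A B E r f"
  by (metis assoc)

lemma p1i1k[simp]: "k \<in> hom C Z A \<Longrightarrow> cmp C Z (bp C A B) A (pr1 C A B) (cmp C Z A (bp C A B) (in1 C A B) k) = k"
  by (subst rav[OF p1i1]) simp_all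
lemma p2i2k[simp]: "k \<in> hom C Z B \<Longrightarrow> cmp C Z (bp C A B) B (pr2 C A B) (cmp C Z B (bp C A B) (in2 C A B) k) = k"
  by (subst rav[OF p2i2]) simp_all
lemma p1i2k[simp]: "k \<in> hom C Z B \<Longrightarrow> cmp C Z (bp C A B) A (pr1 C A B) (cmp C Z B (bp C A B) (in2 C A B) k) = zro C Z A"
  by (subst rav[OF p1i2]) simp_all
lemma p2i1k[simp]: "k \<in> hom C Z A \<Longrightarrow> cmp C Z (bp C A B) B (pr2 C A B) (cmp C Z A (bp C A B) (in1 C A B) k) = zro C Z B"
  by (subst rav[OF p2i1]) simp_all

lemma decomp_cod: assumes f: "f \<in> hom C Z (bp C A B)"
  shows "f = addm C Z (bp C A B) (cmp C Z A (bp C A B) (in1 C A B) (cmp C Z (bp C A B) A (pr1 C A B) f))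
                                 (cmp C Z B (bp C A B) (in2 C A B) (cmp C Z (bp C A B) B (pr2 C A B) f))"
proof -
  have "f = cmp C Z (bp C A B) (bp C A B) (idm C (bp C A B)) f" using f by simp
  also have "\<dots> = cmp C Z (bp C A B) (bp C A B) (addm C (bp C A B) (bp C A B)
              (cmp C (bp C A B) A (bp C A B) (in1 C A B) (pr1 C A B))
              (cmp C (bp C A B) B (bp C A B) (in2 C A B) (pr2 C A B))) f" by (simp only: bpid)
  also have "\<dots> = addm C Z (bp C A B) (cmp C Z A (bp C A B) (in1 C A B) (cmp C Z (bp C A B) A (pr1 C A B) f))
                                 (cmp C Z B (bp C A B) (in2 C A B) (cmp C Z (bp C A B) B (pr2 C A B) f))"
    using f by simp
  finally show ?thesis .
qed

lemma decomp_dom: assumes f: "f \<in> hom C (bp C A B) Y"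
  shows "f = addm C (bp C A B) Y (cmp C (bp C A B) A Y (cmp C A (bp C A B) Y f (in1 C A B)) (pr1 C A B))
                                 (cmp C (bp C A B) B Y (cmp C B (bp C A B) Y f (in2 C A B)) (pr2 C A B))"
proof -
  have "f = cmp C (bp C A B) (bp C A B) Y f (idm C (bp C A B))" using f by simp
  also have "\<dots> = cmp C (bp C A B) (bp C A B) Y f (addm C (bp C A B) (bp C A B)
              (cmp C (bp C A B) A (bp C A B) (in1 C A B) (pr1 C A B))
              (cmp C (bp C A B) B (bp C A B) (in2 C A B) (pr2 C A B)))" by (simp only: bpid)
  also have "\<dots> = addm C (bp C A B) Y (cmp C (bp C A B) A Y (cmp C A (bp C A B) Y f (in1 C A B)) (pr1 C A B))
                                 (cmp C (bp C A B) B Y (cmp C B (bp C A B) Y f (in2 C A B)) (pr2 C A B))"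
    using f by simp
  finally show ?thesis .
qed

lemma to_zob: assumes "f \<in> hom C A (zob C)" shows "f = zro C A (zob C)"
proof -
  have "f = cmp C A (zob C) (zob C) (idm C (zob C)) f" using assms by simp
  also have "\<dots> = zro C A (zob C)" using assms by (simp add: zob_id)
  finally show ?thesis .
qed
lemma from_zob: assumes "f \<in> hom C (zob C) A" shows "f = zro C (zob C) A"
proof -
  have "f = cmp C (zob C) (zob C) A f (idm C (zob C))" using assms by simp
  also have "\<dots> = zro C (zob C) A" using assms by (simp add: zob_id)
  finally show ?thesis .
qed

lemma heq_cod: "f \<in> hom C Z (bp C A B) \<Longrightarrow> g \<in> hom C Z (bp C A B) \<Longrightarrow>
  heq Z A (cmp C Z (bp C A B) A (pr1 C A B) f) (cmp C Z (bp C A B) A (pr1 C A B) g) \<Longrightarrow>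
  heq Z B (cmp C Z (bp C A B) B (pr2 C A B) f) (cmp C Z (bp C A B) B (pr2 C A B) g) \<Longrightarrow>
  heq Z (bp C A B) f g"
  unfolding heq_def by (metis decomp_cod)
lemma heq_dom: "f \<in> hom C (bp C A B) Y \<Longrightarrow> g \<in> hom C (bp C A B) Y \<Longrightarrow>
  heq A Y (cmp C A (bp C A B) Y f (in1 C A B)) (cmp C A (bp C A B) Y g (in1 C A B)) \<Longrightarrow>
  heq B Y (cmp C B (bp C A B) Y f (in2 C A B)) (cmp C B (bp C A B) Y g (in2 C A B)) \<Longrightarrow>
  heq (bp C A B) Y f g"
  unfolding heq_def by (metis decomp_dom)
lemma heq_zc: "f \<in> hom C Z (zob C) \<Longrightarrow> g \<in> hom C Z (zob C) \<Longrightarrow> heq Z (zob C) f g"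
  unfolding heq_def by (metis to_zob)
lemma heq_zd: "f \<in> hom C (zob C) Y \<Longrightarrow> g \<in> hom C (zob C) Y \<Longrightarrow> heq (zob C) Y f g"
  unfolding heq_def by (metis from_zob)
lemma heqD: "heq Z Y f g \<Longrightarrow> f = g" unfolding heq_def by simp

lemmas heqs = heq_cod heq_dom heq_zc heq_zd

end

context DA begin
lemma bpmap_hom[simp]: "f \<in> hom C A B \<Longrightarrow> g \<in> hom C A' B' \<Longrightarrow> bpmap C A B A' B' f g \<in> hom C (bp C A A') (bp C B B')"
  unfolding bpmap_def by simp
lemma colpair_hom[simp]: "x \<in> hom C X A \<Longrightarrow> y \<in> hom C X B \<Longrightarrow> colpair C X A B x y \<in> hom C X (bp C A B)"
  unfolding colpair_def by simp
lemma swapX_hom[simp]: "swapX C A B \<in> hom C (bp C A B) (bp C B A)"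
  unfolding swapX_def by simp
lemma copyX_hom[simp]: "copyX C A \<in> hom C A (bp C A A)"
  unfolding copyX_def by simp
lemma assocX_hom[simp]: "assocX C A B D \<in> hom C (bp C (bp C A B) D) (bp C A (bp C B D))"
  unfolding assocX_def Let_def by simp

lemmas U = bpmap_def colpair_def swapX_def copyX_def assocX_def Let_def

lemma bpmap_cmp: "f \<in> hom C A B \<Longrightarrow> g \<in> hom C B D \<Longrightarrow> f' \<in> hom C A' B' \<Longrightarrow> g' \<in> hom C B' D' \<Longrightarrow>
  cmp C (bp C A A') (bp C B B') (bp C D D') (bpmap C B D B' D' g g') (bpmap C A B A' B' f f')
  = bpmap C A D A' D' (cmp C A B D g f) (cmp C A' B' D' g' f')"
  apply (rule heqD[of "bp C A A'" "bp C D D'"])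
  apply (intro heqs)
  apply (simp_all add: U heq_def)
  done
end


definition assocI :: "('o,'m,'e) dac_scheme \<Rightarrow> 'o \<Rightarrow> 'o \<Rightarrow> 'o \<Rightarrow> 'm" where
  "assocI C A B D =
     (let P = bp C (bp C A B) D; Q = bp C B D; R = bp C A Q in
      addm C R P
        (cmp C R (bp C A B) P (in1 C (bp C A B) D)
           (addm C R (bp C A B)
              (cmp C R A (bp C A B) (in1 C A B) (pr1 C A Q))
              (cmp C R B (bp C A B) (in2 C A B) (cmp C R Q B (pr1 C B D) (pr2 C A Q)))))
        (cmp C R D P (in2 C (bp C A B) D) (cmp C R Q D (pr2 C B D) (pr2 C A Q))))"

context DA begin
lemma assocI_hom[simp]: "assocI C A B D \<in> hom C (bp C A (bp C B D)) (bp C (bp C A B) D)"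
  unfolding assocI_def Let_def by simp

lemmas UU = U assocI_def

lemma assoc_inv1: "cmp C (bp C (bp C A B) D) (bp C A (bp C B D)) (bp C (bp C A B) D) (assocI C A B D) (assocX C A B D)
   = idm C (bp C (bp C A B) D)"
  apply (rule heqD[of "bp C (bp C A B) D" "bp C (bp C A B) D"])
  apply (intro heqs)
  apply (simp_all add: UU heq_def)
  done
lemma assoc_inv2: "cmp C (bp C A (bp C B D)) (bp C (bp C A B) D) (bp C A (bp C B D)) (assocX C A B D) (assocI C A B D)
   = idm C (bp C A (bp C B D))"
  apply (rule heqD[of "bp C A (bp C B D)" "bp C A (bp C B D)"])
  apply (intro heqs)
  apply (simp_all add: UU heq_def)
  done

lemma dpos_hom[simp]: "dpositive C B p \<Longrightarrow> p \<in> hom C B B"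
  unfolding dpositive_def by blast
lemma dpos_zro[simp]: "dpositive C B (zro C B B)"
  unfolding dpositive_def
  by (rule conjI, simp, rule exI[of _ "zob C"], rule exI[of _ "zro C B (zob C)"], simp)
lemma dpos_add[simp]: assumes "dpositive C B p" "dpositive C B q" shows "dpositive C B (addm C B B p q)"
proof -
  obtain D1 \<phi> where a: "\<phi> \<in> hom C B D1" "p = cmp C B D1 B (dag C B D1 \<phi>) \<phi>" using assms(1) unfolding dpositive_def by blast
  obtain D2 \<psi> where b: "\<psi> \<in> hom C B D2" "q = cmp C B D2 B (dag C B D2 \<psi>) \<psi>" using assms(2) unfolding dpositive_def by blast
  show ?thesis unfolding dpositive_def
    apply (rule conjI, simp add: assms)
    apply (rule exI[of _ "bp C D1 D2"], rule exI[of _ "colpair C B D1 D2 \<phi> \<psi>"])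
    using a b by (simp add: colpair_def)
qed
lemma dpos_conj[simp]: assumes "dpositive C B p" "g \<in> hom C B D"
  shows "dpositive C D (cmp C D B D g (cmp C D B B p (dag C B D g)))"
proof -
  obtain D1 \<phi> where a: "\<phi> \<in> hom C B D1" "p = cmp C B D1 B (dag C B D1 \<phi>) \<phi>" using assms(1) unfolding dpositive_def by blast
  show ?thesis unfolding dpositive_def
    apply (rule conjI, simp add: assms)
    apply (rule exI[of _ D1], rule exI[of _ "cmp C D B D1 \<phi> (dag C B D g)"])
    using a assms by simp
qed
lemma dpos_bp[simp]: assumes "dpositive C B p" "dpositive C B' q"
  shows "dpositive C (bp C B B') (bpmap C B B B' B' p q)"
proof -
  obtain D1 \<phi> where a: "\<phi> \<in> hom C B D1" "p = cmp C B D1 B (dag C B D1 \<phi>) \<phi>" using assms(1) unfolding dpositive_def by blast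
  obtain D2 \<psi> where b: "\<psi> \<in> hom C B' D2" "q = cmp C B' D2 B' (dag C B' D2 \<psi>) \<psi>" using assms(2) unfolding dpositive_def by blast
  have e: "bpmap C B B B' B' p q = cmp C (bp C B B') (bp C D1 D2) (bp C B B') (dag C (bp C B B') (bp C D1 D2) (bpmap C B D1 B' D2 \<phi> \<psi>)) (bpmap C B D1 B' D2 \<phi> \<psi>)"
    apply (rule heqD[of "bp C B B'" "bp C B B'"])
    apply (intro heqs)
    using a b by (simp_all add: UU heq_def)
  show ?thesis unfolding dpositive_def
    apply (rule conjI, simp add: assms)
    apply (rule exI[of _ "bp C D1 D2"], rule exI[of _ "bpmap C B D1 B' D2 \<phi> \<psi>"])
    using a b e by simp
qed
end


context DA begin
lemma gsimps[simp]:
  "hom (gauss C X) = gauss_hom C X"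
  "idm (gauss C X) = (\<lambda>A. glift C X A (idm C A))"
  "cmp (gauss C X) = gauss_cmp C X"
  "tens (gauss C X) = bp C"
  "tensm (gauss C X) = gauss_tensm C X"
  "munit (gauss C X) = zob C"
  "asc (gauss C X) = (\<lambda>A B D. glift C X (bp C A (bp C B D)) (assocX C A B D))"
  "lun (gauss C X) = (\<lambda>A. glift C X A (pr2 C (zob C) A))"
  "run (gauss C X) = (\<lambda>A. glift C X A (pr1 C A (zob C)))"
  "brd (gauss C X) = (\<lambda>A B. glift C X (bp C B A) (swapX C A B))"
  "cpy (gauss C X) = (\<lambda>A. glift C X (bp C A A) (copyX C A))"
  "del (gauss C X) = (\<lambda>A. glift C X (zob C) (zro C A (zob C)))"
  by (simp_all add: gauss_def)

lemma ghom[simp]: "(f, p, x) \<in> gauss_hom C X A B \<longleftrightarrow> f \<in> hom C A B \<and> dpositive C B p \<and> x \<in> hom C X B"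
  unfolding gauss_hom_def by simp

lemma gcmp[simp]: "gauss_cmp C X A B D (g, q, y) (f, p, x) =
        (cmp C A B D g f,
         addm C D D q (cmp C D B D (cmp C B B D g p) (dag C B D g)),
         addm C X D y (cmp C X B D g x))"
  unfolding gauss_cmp_def by simp

lemma gtens[simp]: "gauss_tensm C X A B A' B' (f, p, x) (g, q, y) =
        (bpmap C A B A' B' f g, bpmap C B B B' B' p q, colpair C X B B' x y)"
  unfolding gauss_tensm_def by simp

lemma gcat: "category (gauss C X)"
  unfolding category_def
  by (simp add: split_paired_All glift_def)
end


context DA begin
lemma iso_glift: "f \<in> hom C A B \<Longrightarrow> g \<in> hom C B A \<Longrightarrow> cmp C A B A g f = idm C A \<Longrightarrow> cmp C B A B f g = idm C B
  \<Longrightarrow> iso (gauss C X) A B (glift C X B f)"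
  unfolding iso_def glift_def
  by (simp, rule bexI[of _ "glift C X A g"], simp_all add: glift_def)

lemma hc: "heq A D (cmp C A B D g f) h \<Longrightarrow> cmp C A B D g f = h" by (simp add: heq_def)
lemma ha: "heq A B (addm C A B f g) h \<Longrightarrow> addm C A B f g = h" by (simp add: heq_def)
lemma hb: "heq (bp C A A') (bp C B B') (bpmap C A B A' B' f g) h \<Longrightarrow> bpmap C A B A' B' f g = h" by (simp add: heq_def)
lemma hp: "heq X (bp C A B) (colpair C X A B f g) h \<Longrightarrow> colpair C X A B f g = h" by (simp add: heq_def)

lemma hz: "heq A B (zro C A B) h \<Longrightarrow> zro C A B = h" by (simp add: heq_def)
lemma hi: "heq A A (idm C A) h \<Longrightarrow> idm C A = h" by (simp add: heq_def)

lemma iso_asc[simp]: "iso (gauss C X) (bp C (bp C A B) D) (bp C A (bp C B D)) (assocX C A B D, zro C (bp C A (bp C B D)) (bp C A (bp C B D)), zro C X (bp C A (bp C B D)))"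
  using iso_glift[of "assocX C A B D" _ _ "assocI C A B D"] assoc_inv1 assoc_inv2 by (simp add: glift_def)

lemma lun_inv: "cmp C (bp C (zob C) A) A (bp C (zob C) A) (in2 C (zob C) A) (pr2 C (zob C) A) = idm C (bp C (zob C) A)"
  apply (rule hc) apply (intro heqs) by (simp_all add: heq_def)
lemma run_inv: "cmp C (bp C A (zob C)) A (bp C A (zob C)) (in1 C A (zob C)) (pr1 C A (zob C)) = idm C (bp C A (zob C))"
  apply (rule hc) apply (intro heqs) by (simp_all add: heq_def)
lemma swap_inv: "cmp C (bp C A B) (bp C B A) (bp C A B) (swapX C B A) (swapX C A B) = idm C (bp C A B)"
  apply (rule hc) apply (intro heqs) by (simp_all add: heq_def UU)

lemma iso_lun[simp]: "iso (gauss C X) (bp C (zob C) A) A (pr2 C (zob C) A, zro C A A, zro C X A)"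
  using iso_glift[of "pr2 C (zob C) A" _ _ "in2 C (zob C) A"] lun_inv by (simp add: glift_def)
lemma iso_run[simp]: "iso (gauss C X) (bp C A (zob C)) A (pr1 C A (zob C), zro C A A, zro C X A)"
  using iso_glift[of "pr1 C A (zob C)" _ _ "in1 C A (zob C)"] run_inv by (simp add: glift_def)
lemma iso_brd[simp]: "iso (gauss C X) (bp C A B) (bp C B A) (swapX C A B, zro C (bp C B A) (bp C B A), zro C X (bp C B A))"
  using iso_glift[of "swapX C A B" _ _ "swapX C B A"] swap_inv[of A B] swap_inv[of B A] by (simp add: glift_def)

lemma gsm: "sym_monoidal (gauss C X)"
  unfolding sym_monoidal_def
  apply (simp add: split_paired_All glift_def gcat)
  apply (safe)
  apply (auto intro!: hc ha hb hp hz hi heqs simp: UU)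
  apply (simp_all add: heq_def UU)
  done
end




lemma cat_idr: "category D \<Longrightarrow> f \<in> hom D A B \<Longrightarrow> cmp D A A B f (idm D A) = f"
  unfolding category_def by blast
lemma cat_idl: "category D \<Longrightarrow> f \<in> hom D A B \<Longrightarrow> cmp D A B B (idm D B) f = f"
  unfolding category_def by blast
lemma cat_assoc: "category D \<Longrightarrow> f \<in> hom D A B \<Longrightarrow> g \<in> hom D B E \<Longrightarrow> h \<in> hom D E F \<Longrightarrow>
        cmp D A E F h (cmp D A B E g f) = cmp D A B F (cmp D B E F h g) f"
  unfolding category_def by blast

lemma cinv_unique:
  assumes c: "category D" and a: "f \<in> hom D A B" "g \<in> hom D B A" "cmp D A B A g f = idm D A" "cmp D B A B f g = idm D B"
  shows "cinv D A B f = g"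
proof -
  let ?P = "\<lambda>g. g \<in> hom D B A \<and> cmp D A B A g f = idm D A \<and> cmp D B A B f g = idm D B"
  have "?P (SOME g. ?P g)" by (rule someI[of ?P g]) (use a in simp)
  then obtain h where h: "h = (SOME g. ?P g)" "?P h" by blast
  have "h = cmp D B B A h (idm D B)" using cat_idr[OF c, of h] h by simp
  also have "\<dots> = cmp D B B A h (cmp D B A B f g)" using a by simp
  also have "\<dots> = cmp D B A A (cmp D A B A h f) g" using cat_assoc[OF c, of g B A f B h A] a h by simp
  also have "\<dots> = g" using h cat_idl[OF c a(2)] by simp
  finally show ?thesis using h unfolding cinv_def by simp
qed

context DA begin
lemma bpmap_zz[simp]: "bpmap C A B A' B' (zro C A B) (zro C A' B') = zro C (bp C A A') (bp C B B')"
  unfolding bpmap_def by simp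
lemma colpair_zz[simp]: "colpair C X A B (zro C X A) (zro C X B) = zro C X (bp C A B)"
  unfolding colpair_def by simp
end

context DA begin
lemma cinv_asc[simp]: "cinv (gauss C X) (bp C (bp C A B) D) (bp C A (bp C B D))
   (assocX C A B D, zro C (bp C A (bp C B D)) (bp C A (bp C B D)), zro C X (bp C A (bp C B D)))
   = (assocI C A B D, zro C (bp C (bp C A B) D) (bp C (bp C A B) D), zro C X (bp C (bp C A B) D))"
  by (rule cinv_unique[OF gcat]) (simp_all add: assoc_inv1 assoc_inv2 glift_def)

lemma gmk: "markov_category (gauss C X)"
  unfolding markov_category_def
  apply (intro conjI)
  subgoal by (rule gsm)
  subgoal by (simp add: glift_def)
  subgoal by (simp add: glift_def) (auto intro!: hc ha hb hp hz hi heqs simp: UU heq_def)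
  subgoal by (simp add: glift_def) (auto intro!: hc ha hb hp hz hi heqs simp: UU heq_def)
  subgoal by (simp add: glift_def) (auto intro!: hc ha hb hp hz hi heqs simp: UU heq_def)
  subgoal apply (simp add: glift_def) apply (auto intro!: hc ha hb hp hz hi heqs simp: UU) by (simp_all add: UU heq_def)
  subgoal apply (simp add: glift_def mid4_def Let_def) apply (intro allI) apply (rule sym) apply (rule hc) apply (intro heqs) by (simp_all add: UU heq_def)
  subgoal by (simp add: glift_def)
  subgoal by (simp add: split_paired_All glift_def)
  done
end

theorem mainTheorem1:
  fixes C :: "('o, 'm, 'e) dac_scheme" and X :: 'o
  assumes "dagger_additive C"
  shows "markov_category (gauss C X)"
proof -
  interpret DA C by (rule DA.intro) (rule assms)
  show ?thesis by (rule gmk)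
qed

end
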